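(* Let $n,r\geq 1$ and $0\le k\le n$. Then \[ \mathcal{S}_{r}\Lambda^k(\mathbb{R}^n)\subset \mathcal{S}_{r+1}^-\Lambda^k(\mathbb{R}^n)\subset \mathcal{S}_{r+1}\Lambda^k(\mathbb{R}^n). \]
   Context: Fix $n\ge1$. For a multi-index $\alpha\in\mathbb{N}^n$ (nonnegative integers) and a subset $\sigma=\{\sigma(1)<\dots<\sigma(k)\}\subset\{1,\dots,n\}$, the form monomial is $x^\alpha dx_\sigma:=x_1^{\alpha_1}\cdots x_n^{\alpha_n}\,dx_{\sigma(1)}\wedge\cdots\wedge dx_{\sigma(k)}$, of degree $|\alpha|=\sum_i\alpha_i$. $\mathcal{H}_r\Lambda^k(\mathbb{R}^n)$ is the span of form monomials with $|\alpha|=r$, $|\sigma|=k$ (it is $0$ if $r<0$ or $k\notin\{0,\dots,n\}$), and $\mathcal{P}_r\Lambda^k:=\bigoplus_{j=0}^r\mathcal{H}_j\Lambda^k$ ($=0$ if $r<0$). $d$ is the exterior derivative. The Koszul operator $\kappa$ is defined on monomials by $\kappa(x^\alpha dx_\sigma)=\sum_{i=1}^k(-1)^{i+1}x^\alpha x_{\sigma(i)}\,dx_{\sigma(1)}\wedge\cdots\wedge\widehat{dx_{\sigma(i)}}\wedge\cdots\wedge dx_{\sigma(k)}$ (hat = omitted) and extended linearly. The linear degree of a form monomial is $\mathrm{ldeg}(x^\alpha dx_\sigma):=\#\{i\notin\sigma:\alpha_i=1\}$, and $\mathcal{H}_{r,l}\Lambda^k(\mathbb{R}^n)$ is the span of the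 form monomials in $\mathcal{H}_r\Lambda^k$ with linear degree $\ge l$. Define $\mathcal{J}_r\Lambda^k(\mathbb{R}^n):=\sum_{l\ge1}\kappa\,\mathcal{H}_{r+l-1,l}\Lambda^{k+1}(\mathbb{R}^n)$. The serendipity space is $\mathcal{S}_r\Lambda^k(\mathbb{R}^n):=\mathcal{P}_r\Lambda^k+\mathcal{J}_r\Lambda^k+d\,\mathcal{J}_{r+1}\Lambda^{k-1}$ (this sum is direct; forms of degree $-1$ or $n+1$ are $0$). For $r\ge1$ the trimmed serendipity space is $\mathcal{S}_r^-\Lambda^k(\mathbb{R}^n):=\mathcal{S}_{r-1}\Lambda^k(\mathbb{R}^n)+\kappa\,\mathcal{S}_{r-1}\Lambda^{k+1}(\mathbb{R}^n)$. *)

theory Defs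
  imports Complex_Main
begin

(* A form monomial x^alpha dx_sigma is encoded by the pair (alpha, sigma), where
   alpha :: nat => nat is the multi-index (indices 1..n) and sigma :: nat set is the
   (increasingly ordered) set of differential indices.  A polynomial differential form
   is a real coefficient function on monomials (all forms considered have finite support). *)

type_synonym mono = "(nat \<Rightarrow> nat) \<times> nat set"
type_synonym form = "mono \<Rightarrow> real"

definition valid_mono :: "nat \<Rightarrow> mono \<Rightarrow> bool" where
  "valid_mono n m \<longleftrightarrow> (\<forall>i. i \<notin> {1..n} \<longrightarrow> fst m i = 0) \<and> snd m \<subseteq> {1..n}"

definition mdeg :: "nat \<Rightarrow> (nat \<Rightarrow> nat) \<Rightarrow> nat" where
  "mdeg n \<alpha> = (\<Sum>i\<in>{1..n}. \<alpha> i)"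

definition ldeg :: "nat \<Rightarrow> mono \<Rightarrow> nat" where
  "ldeg n m = card {i\<in>{1..n}. i \<notin> snd m \<and> fst m i = 1}"

definition mono_form :: "mono \<Rightarrow> form" where
  "mono_form m = (\<lambda>p. if p = m then 1 else 0)"

definition zero_form :: form where
  "zero_form = (\<lambda>p. 0)"

definition lspan :: "form set \<Rightarrow> form set" where
  "lspan A = {f. \<exists>F c. finite F \<and> F \<subseteq> A \<and> f = (\<lambda>p. \<Sum>g\<in>F. c g * g p)}"

definition supp :: "form \<Rightarrow> mono set" where
  "supp f = {p. f p \<noteq> 0}"

(* Koszul operator on a monomial: sum over i of (-1)^(i+1) x^alpha x_{sigma(i)} dx_{sigma - sigma(i)};
   the position i of s in sigma satisfies i - 1 = card {j in sigma. j < s}. *)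
definition kappa_mono :: "mono \<Rightarrow> form" where
  "kappa_mono m = (\<lambda>p. \<Sum>s\<in>snd m. (-1) ^ card {j\<in>snd m. j < s} *
      (if p = ((fst m)(s := fst m s + 1), snd m - {s}) then 1 else 0))"

definition kappa :: "form \<Rightarrow> form" where
  "kappa f = (\<lambda>p. \<Sum>q\<in>supp f. f q * kappa_mono q p)"

(* exterior derivative on a monomial: sum over i not in sigma of
   alpha_i x^(alpha - e_i) dx_i /\ dx_sigma, and dx_i /\ dx_sigma = (-1)^card{j in sigma. j<i} dx_(sigma + i) *)
definition d_mono :: "nat \<Rightarrow> mono \<Rightarrow> form" where
  "d_mono n m = (\<lambda>p. \<Sum>i\<in>{1..n} - snd m. real (fst m i) * (-1) ^ card {j\<in>snd m. j < i} *
      (if p = ((fst m)(i := fst m i - 1), insert i (snd m)) then 1 else 0))"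

definition dform :: "nat \<Rightarrow> form \<Rightarrow> form" where
  "dform n f = (\<lambda>p. \<Sum>q\<in>supp f. f q * d_mono n q p)"

definition Hrl :: "nat \<Rightarrow> nat \<Rightarrow> nat \<Rightarrow> nat \<Rightarrow> form set" where
  "Hrl n r l k = lspan {mono_form m | m. valid_mono n m \<and> mdeg n (fst m) = r
       \<and> card (snd m) = k \<and> ldeg n m \<ge> l}"

definition Hsp :: "nat \<Rightarrow> nat \<Rightarrow> nat \<Rightarrow> form set" where
  "Hsp n r k = Hrl n r 0 k"

definition Psp :: "nat \<Rightarrow> nat \<Rightarrow> nat \<Rightarrow> form set" where
  "Psp n r k = lspan (\<Union>j\<in>{0..r}. Hsp n j k)"

definition Jsp :: "nat \<Rightarrow> nat \<Rightarrow> nat \<Rightarrow> form set" where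
  "Jsp n r k = lspan (\<Union>l\<in>{1..}. kappa ` Hrl n (r + l - 1) l (k + 1))"

(* S_r Lambda^k = P_r Lambda^k + J_r Lambda^k + d J_{r+1} Lambda^(k-1), with Lambda^(-1) = 0 *)
definition Ssp :: "nat \<Rightarrow> nat \<Rightarrow> nat \<Rightarrow> form set" where
  "Ssp n r k = lspan (Psp n r k \<union> Jsp n r k \<union>
      (if k = 0 then {zero_form} else dform n ` Jsp n (r + 1) (k - 1)))"

(* trimmed serendipity, for r >= 1: S_r^- Lambda^k = S_(r-1) Lambda^k + kappa S_(r-1) Lambda^(k+1) *)
definition Sminus :: "nat \<Rightarrow> nat \<Rightarrow> nat \<Rightarrow> form set" where
  "Sminus n r k = lspan (Ssp n (r - 1) k \<union> kappa ` Ssp n (r - 1) (k + 1))"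

end

theory Submission
  imports Defs
begin

definition opx :: "(mono \<Rightarrow> form) \<Rightarrow> form \<Rightarrow> form" where
  "opx T f = (\<lambda>p. \<Sum>q\<in>supp f. f q * T q p)"

definition FS :: "form set" where "FS = {f. finite (supp f)}"

lemma kappa_opx: "kappa = opx kappa_mono"
  by (rule ext) (simp add: kappa_def opx_def)

lemma dform_opx: "dform n = opx (d_mono n)"
  by (rule ext) (simp add: dform_def opx_def)

lemma opx_eq: "finite S \<Longrightarrow> supp f \<subseteq> S \<Longrightarrow> opx T f p = (\<Sum>q\<in>S. f q * T q p)"
  unfolding opx_def by (rule sum.mono_neutral_left) (auto simp: supp_def)

lemma supp_sum: "supp (\<lambda>p. \<Sum>q\<in>S. c q * G q p) \<subseteq> (\<Union>q\<in>S. supp (G q))"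
proof
  fix x assume x: "x \<in> supp (\<lambda>p. \<Sum>q\<in>S. c q * G q p)"
  show "x \<in> (\<Union>q\<in>S. supp (G q))"
  proof (rule ccontr)
    assume "x \<notin> (\<Union>q\<in>S. supp (G q))"
    hence "\<forall>q\<in>S. G q x = 0" by (auto simp: supp_def)
    hence "(\<Sum>q\<in>S. c q * G q x) = 0" by simp
    with x show False by (simp add: supp_def)
  qed
qed

lemma opx_lin:
  assumes "finite S" "\<forall>q\<in>S. finite (supp (G q))"
  shows "opx T (\<lambda>p. \<Sum>q\<in>S. c q * G q p) = (\<lambda>p. \<Sum>q\<in>S. c q * opx T (G q) p)"
proof (rule ext)
  fix p
  let ?U = "\<Union>q\<in>S. supp (G q)"
  have U: "finite ?U" using assms by auto
  have "opx T (\<lambda>p. \<Sum>q\<in>S. c q * G q p) p = (\<Sum>y\<in>?U. (\<Sum>q\<in>S. c q * G q y) * T y p)"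
    by (rule opx_eq[OF U supp_sum])
  also have "\<dots> = (\<Sum>y\<in>?U. \<Sum>q\<in>S. c q * (G q y * T y p))"
    by (simp add: sum_distrib_right mult.assoc)
  also have "\<dots> = (\<Sum>q\<in>S. \<Sum>y\<in>?U. c q * (G q y * T y p))"
    by (rule sum.swap)
  also have "\<dots> = (\<Sum>q\<in>S. c q * (\<Sum>y\<in>?U. G q y * T y p))"
    by (simp add: sum_distrib_left)
  also have "\<dots> = (\<Sum>q\<in>S. c q * opx T (G q) p)"
  proof (rule sum.cong[OF refl])
    fix q assume "q \<in> S"
    hence "supp (G q) \<subseteq> ?U" by auto
    thus "c q * (\<Sum>y\<in>?U. G q y * T y p) = c q * opx T (G q) p"
      using opx_eq[OF U] by simp
  qed
  finally show "opx T (\<lambda>p. \<Sum>q\<in>S. c q * G q p) p = (\<Sum>q\<in>S. c q * opx T (G q) p)" .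
qed

lemma opx_lin2:
  assumes "f \<in> FS" "g \<in> FS"
  shows "opx T (\<lambda>p. a * f p + b * g p) = (\<lambda>p. a * opx T f p + b * opx T g p)"
proof -
  have "opx T (\<lambda>p. \<Sum>q\<in>(UNIV::bool set). (if q then a else b) * (if q then f else g) p)
     = (\<lambda>p. \<Sum>q\<in>(UNIV::bool set). (if q then a else b) * opx T (if q then f else g) p)"
    by (rule opx_lin) (use assms in \<open>auto simp: FS_def\<close>)
  thus ?thesis by (simp add: UNIV_bool add.commute)
qed

lemma opx_supp: "supp f \<subseteq> {q. P q} \<Longrightarrow> (\<And>q. P q \<Longrightarrow> supp (T q) \<subseteq> M) \<Longrightarrow> supp (opx T f) \<subseteq> M"
  unfolding opx_def using supp_sum[where S="supp f" and c=f and G=T] by blast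

lemma opx_FS: "(\<And>q. T q \<in> FS) \<Longrightarrow> f \<in> FS \<Longrightarrow> opx T f \<in> FS"
proof -
  assume a: "\<And>q. T q \<in> FS" "f \<in> FS"
  have "supp (opx T f) \<subseteq> (\<Union>q\<in>supp f. supp (T q))"
    unfolding opx_def by (rule supp_sum)
  moreover have "finite (\<Union>q\<in>supp f. supp (T q))" using a by (auto simp: FS_def)
  ultimately show ?thesis by (simp add: FS_def finite_subset)
qed

lemma supp_mono_form: "supp (mono_form m) = {m}"
  by (auto simp: supp_def mono_form_def)

lemma opx_mono_form: "opx T (mono_form m) = T m"
  by (rule ext) (simp add: opx_def supp_mono_form, simp add: mono_form_def)

lemma form_expand: "finite (supp f) \<Longrightarrow> f = (\<lambda>p. \<Sum>q\<in>supp f. f q * mono_form q p)"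
proof (rule ext)
  fix p assume "finite (supp f)"
  have "(\<Sum>q\<in>supp f. f q * mono_form q p) = (\<Sum>q\<in>supp f. if p = q then f q else 0)"
    by (rule sum.cong) (auto simp: mono_form_def)
  also have "\<dots> = f p" using \<open>finite (supp f)\<close> by (simp add: supp_def)
  finally show "f p = (\<Sum>q\<in>supp f. f q * mono_form q p)" by simp
qed

definition subsp :: "form set \<Rightarrow> bool" where
  "subsp V \<longleftrightarrow> zero_form \<in> V \<and> (\<forall>f\<in>V. \<forall>g\<in>V. (\<lambda>p. f p + g p) \<in> V) \<and> (\<forall>c. \<forall>f\<in>V. (\<lambda>p. c * f p) \<in> V)"

lemma subsp_sum:
  assumes V: "subsp V" and S: "finite S"
  shows "(\<forall>q\<in>S. G q \<in> V) \<longrightarrow> (\<lambda>p. \<Sum>q\<in>S. c q * G q p) \<in> V"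
  using S
proof (induct S rule: finite_induct)
  case empty
  then show ?case using V by (simp add: subsp_def zero_form_def)
next
  case (insert x F)
  show ?case
  proof
    assume h: "\<forall>q\<in>insert x F. G q \<in> V"
    have a: "(\<lambda>p. c x * G x p) \<in> V" using V h by (simp add: subsp_def)
    have b: "(\<lambda>p. \<Sum>q\<in>F. c q * G q p) \<in> V" using insert h by auto
    have cl: "\<forall>f\<in>V. \<forall>g\<in>V. (\<lambda>p. f p + g p) \<in> V" using V by (simp add: subsp_def)
    have "(\<lambda>p. c x * G x p + (\<Sum>q\<in>F. c q * G q p)) \<in> V"
      using bspec[OF bspec[OF cl a] b] by simp
    thus "(\<lambda>p. \<Sum>q\<in>insert x F. c q * G q p) \<in> V" using insert by simp
  qed
qed

lemma lspan_sub: "subsp V \<Longrightarrow> A \<subseteq> V \<Longrightarrow> lspan A \<subseteq> V"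
  unfolding lspan_def using subsp_sum[of V _ "\<lambda>g. g"] by blast

lemma lspan_sup: "A \<subseteq> lspan A"
proof
  fix f assume "f \<in> A"
  thus "f \<in> lspan A" unfolding lspan_def mem_Collect_eq
    by (intro exI[of _ "{f}"] exI[of _ "\<lambda>_. 1"]) auto
qed

lemma lspan_mono: "A \<subseteq> B \<Longrightarrow> lspan A \<subseteq> lspan B"
  unfolding lspan_def by blast

lemma subsp_lspan: "subsp (lspan A)"
  unfolding subsp_def
proof (intro conjI ballI allI)
  show "zero_form \<in> lspan A" unfolding lspan_def zero_form_def mem_Collect_eq
    by (intro exI[of _ "{}"]) auto
next
  fix f g assume "f \<in> lspan A" "g \<in> lspan A"
  then obtain F1 c1 F2 c2 where h: "finite F1" "F1 \<subseteq> A" "f = (\<lambda>p. \<Sum>g\<in>F1. c1 g * g p)"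
    "finite F2" "F2 \<subseteq> A" "g = (\<lambda>p. \<Sum>g\<in>F2. c2 g * g p)" unfolding lspan_def by blast
  let ?c = "\<lambda>h. (if h \<in> F1 then c1 h else 0) + (if h \<in> F2 then c2 h else 0)"
  have "\<And>p. (\<Sum>h\<in>F1 \<union> F2. ?c h * h p) = f p + g p"
  proof -
    fix p
    have e1: "(\<Sum>h\<in>F1 \<union> F2. (if h \<in> F1 then c1 h * h p else 0)) = (\<Sum>h\<in>F1. c1 h * h p)"
      using h by (intro sum.mono_neutral_cong_right) auto
    have e2: "(\<Sum>h\<in>F1 \<union> F2. (if h \<in> F2 then c2 h * h p else 0)) = (\<Sum>h\<in>F2. c2 h * h p)"
      using h by (intro sum.mono_neutral_cong_right) auto
    have "(\<Sum>h\<in>F1 \<union> F2. ?c h * h p) = (\<Sum>h\<in>F1 \<union> F2. (if h \<in> F1 then c1 h * h p else 0) + (if h \<in> F2 then c2 h * h p else 0))"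
      by (rule sum.cong) (auto simp: distrib_right)
    also have "\<dots> = f p + g p" using e1 e2 h by (simp add: sum.distrib)
    finally show "(\<Sum>h\<in>F1 \<union> F2. ?c h * h p) = f p + g p" .
  qed
  thus "(\<lambda>p. f p + g p) \<in> lspan A" unfolding lspan_def mem_Collect_eq using h
    by (intro exI[of _ "F1 \<union> F2"] exI[of _ "?c"]) auto
next
  fix c f assume "f \<in> lspan A"
  then obtain F1 c1 where h: "finite F1" "F1 \<subseteq> A" "f = (\<lambda>p. \<Sum>g\<in>F1. c1 g * g p)"
    unfolding lspan_def by blast
  thus "(\<lambda>p. c * f p) \<in> lspan A" unfolding lspan_def mem_Collect_eq
    by (intro exI[of _ "F1"] exI[of _ "\<lambda>g. c * c1 g"]) (auto simp: sum_distrib_left mult.assoc)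
qed

lemma subsp_FS: "subsp FS"
  unfolding subsp_def FS_def
proof (intro conjI ballI allI)
  show "zero_form \<in> {f. finite (supp f)}" by (simp add: zero_form_def supp_def)
next
  fix f g assume "f \<in> {f. finite (supp f)}" "g \<in> {f. finite (supp f)}"
  moreover have "supp (\<lambda>p. f p + g p) \<subseteq> supp f \<union> supp g" by (auto simp: supp_def)
  ultimately show "(\<lambda>p. f p + g p) \<in> {f. finite (supp f)}" by (auto intro: finite_subset)
next
  fix c f assume "f \<in> {f. finite (supp f)}"
  moreover have "supp (\<lambda>p. c * f p) \<subseteq> supp f" by (auto simp: supp_def)
  ultimately show "(\<lambda>p. c * f p) \<in> {f. finite (supp f)}" by (auto intro: finite_subset)
qed

lemma lspan_monos: "lspan {mono_form m | m. P m} = {f\<in>FS. supp f \<subseteq> {m. P m}}"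
proof
  have V: "subsp {f\<in>FS. supp f \<subseteq> {m. P m}}"
    unfolding subsp_def
  proof (intro conjI ballI allI)
    show "zero_form \<in> {f\<in>FS. supp f \<subseteq> {m. P m}}" using subsp_FS
      by (simp add: subsp_def supp_def zero_form_def)
  next
    fix f g assume a: "f \<in> {f\<in>FS. supp f \<subseteq> {m. P m}}" "g \<in> {f\<in>FS. supp f \<subseteq> {m. P m}}"
    have "(\<lambda>p. f p + g p) \<in> FS" using subsp_FS a by (simp add: subsp_def)
    moreover have "supp (\<lambda>p. f p + g p) \<subseteq> supp f \<union> supp g" by (auto simp: supp_def)
    ultimately show "(\<lambda>p. f p + g p) \<in> {f\<in>FS. supp f \<subseteq> {m. P m}}" using a by blast
  next
    fix c f assume a: "f \<in> {f\<in>FS. supp f \<subseteq> {m. P m}}"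
    have "(\<lambda>p. c * f p) \<in> FS" using subsp_FS a by (simp add: subsp_def)
    moreover have "supp (\<lambda>p. c * f p) \<subseteq> supp f" by (auto simp: supp_def)
    ultimately show "(\<lambda>p. c * f p) \<in> {f\<in>FS. supp f \<subseteq> {m. P m}}" using a by blast
  qed
  show "lspan {mono_form m | m. P m} \<subseteq> {f\<in>FS. supp f \<subseteq> {m. P m}}"
    by (rule lspan_sub[OF V]) (auto simp: supp_mono_form FS_def)
next
  show "{f\<in>FS. supp f \<subseteq> {m. P m}} \<subseteq> lspan {mono_form m | m. P m}"
  proof
    fix f assume f: "f \<in> {f\<in>FS. supp f \<subseteq> {m. P m}}"
    hence fin: "finite (supp f)" by (simp add: FS_def)
    have "(\<lambda>p. \<Sum>q\<in>supp f. f q * mono_form q p) \<in> lspan {mono_form m | m. P m}"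
    proof -
      have "\<forall>q\<in>supp f. mono_form q \<in> lspan {mono_form m | m. P m}"
        using f lspan_sup[of "{mono_form m | m. P m}"] by blast
      thus ?thesis using subsp_sum[OF subsp_lspan fin, where G=mono_form and c=f] by blast
    qed
    thus "f \<in> lspan {mono_form m | m. P m}" using form_expand[OF fin] by simp
  qed
qed

definition lin :: "(form \<Rightarrow> form) \<Rightarrow> bool" where
  "lin T \<longleftrightarrow> (\<forall>f\<in>FS. T f \<in> FS) \<and> (\<forall>F c. finite F \<longrightarrow> F \<subseteq> FS \<longrightarrow>
     T (\<lambda>p. \<Sum>g\<in>F. c g * g p) = (\<lambda>p. \<Sum>g\<in>F. c g * T g p))"

lemma lin_opx: "(\<And>q. T q \<in> FS) \<Longrightarrow> lin (opx T)"
  unfolding lin_def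
proof (intro conjI ballI allI impI)
  fix f assume "\<And>q. T q \<in> FS" "f \<in> FS" thus "opx T f \<in> FS" by (rule opx_FS)
next
  fix F c assume "finite F" "F \<subseteq> FS"
  thus "opx T (\<lambda>p. \<Sum>g\<in>F. c g * g p) = (\<lambda>p. \<Sum>g\<in>F. c g * opx T g p)"
    by (intro opx_lin) (auto simp: FS_def)
qed

lemma lin_comp: "(\<And>q. T q \<in> FS) \<Longrightarrow> (\<And>q. U q \<in> FS) \<Longrightarrow> lin (\<lambda>f. opx T (opx U f))"
  unfolding lin_def
proof (intro conjI ballI allI impI)
  fix f assume "\<And>q. T q \<in> FS" "\<And>q. U q \<in> FS" "f \<in> FS" thus "opx T (opx U f) \<in> FS" by (simp add: opx_FS)
next
  fix F c assume a: "\<And>q. T q \<in> FS" "\<And>q. U q \<in> FS" "finite F" "F \<subseteq> FS"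
  have "opx U (\<lambda>p. \<Sum>g\<in>F. c g * g p) = (\<lambda>p. \<Sum>g\<in>F. c g * opx U g p)"
    using a by (intro opx_lin) (auto simp: FS_def)
  moreover have "opx T (\<lambda>p. \<Sum>g\<in>F. c g * opx U g p) = (\<lambda>p. \<Sum>g\<in>F. c g * opx T (opx U g) p)"
    using a opx_FS[of U] by (intro opx_lin) (auto simp: FS_def)
  ultimately show "opx T (opx U (\<lambda>p. \<Sum>g\<in>F. c g * g p)) = (\<lambda>p. \<Sum>g\<in>F. c g * opx T (opx U g) p)"
    by simp
qed

lemma lin_image: "lin T \<Longrightarrow> A \<subseteq> FS \<Longrightarrow> subsp V \<Longrightarrow> T ` A \<subseteq> V \<Longrightarrow> T ` lspan A \<subseteq> V"
proof
  fix y assume h: "lin T" "A \<subseteq> FS" "subsp V" "T ` A \<subseteq> V" "y \<in> T ` lspan A"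
  then obtain F c where F: "finite F" "F \<subseteq> A" "y = T (\<lambda>p. \<Sum>g\<in>F. c g * g p)"
    unfolding lspan_def by blast
  hence "y = (\<lambda>p. \<Sum>g\<in>F. c g * T g p)" using h unfolding lin_def by auto
  thus "y \<in> V" using subsp_sum[OF h(3) F(1), of T c] F h by auto
qed

definition eps :: "nat set \<Rightarrow> nat \<Rightarrow> real" where
  "eps T i = (-1) ^ card {j\<in>T. j < i}"

lemma kappa_mono_eps: "kappa_mono (a, S) = (\<lambda>p. \<Sum>s\<in>S. eps S s * (if p = (a(s := a s + 1), S - {s}) then 1 else 0))"
  by (simp add: kappa_mono_def eps_def)

lemma d_mono_eps: "d_mono n (a, S) = (\<lambda>p. \<Sum>i\<in>{1..n} - S. real (a i) * eps S i * (if p = (a(i := a i - 1), insert i S) then 1 else 0))"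
  by (simp add: d_mono_def eps_def)

lemma supp_kappa_mono: "supp (kappa_mono (a, S)) \<subseteq> (\<lambda>s. (a(s := a s + 1), S - {s})) ` S"
proof
  fix p assume p: "p \<in> supp (kappa_mono (a, S))"
  show "p \<in> (\<lambda>s. (a(s := a s + 1), S - {s})) ` S"
  proof (rule ccontr)
    assume "p \<notin> (\<lambda>s. (a(s := a s + 1), S - {s})) ` S"
    hence "\<forall>s\<in>S. p \<noteq> (a(s := a s + 1), S - {s})" by blast
    hence "kappa_mono (a, S) p = 0" by (simp add: kappa_mono_eps)
    with p show False by (simp add: supp_def)
  qed
qed

lemma kappa_mono_FS: "kappa_mono m \<in> FS"
proof (cases m)
  case (Pair a S)
  show ?thesis
  proof (cases "finite S")
    case True
    thus ?thesis using supp_kappa_mono[of a S] Pair by (auto simp: FS_def intro: finite_subset)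
  next
    case False
    hence "kappa_mono m = (\<lambda>p. 0)" using Pair by (simp add: kappa_mono_def)
    thus ?thesis by (simp add: FS_def supp_def)
  qed
qed

lemma supp_d_mono: "supp (d_mono n (a, S)) \<subseteq> (\<lambda>i. (a(i := a i - 1), insert i S)) ` {i\<in>{1..n} - S. a i \<noteq> 0}"
proof
  fix p assume p: "p \<in> supp (d_mono n (a, S))"
  show "p \<in> (\<lambda>i. (a(i := a i - 1), insert i S)) ` {i\<in>{1..n} - S. a i \<noteq> 0}"
  proof (rule ccontr)
    assume "p \<notin> (\<lambda>i. (a(i := a i - 1), insert i S)) ` {i\<in>{1..n} - S. a i \<noteq> 0}"
    hence "\<forall>i\<in>{1..n} - S. real (a i) * eps S i * (if p = (a(i := a i - 1), insert i S) then 1 else 0) = 0"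
      by auto
    hence "d_mono n (a, S) p = 0" by (simp only: d_mono_eps) (rule sum.neutral)
    with p show False by (simp add: supp_def)
  qed
qed

lemma d_mono_FS: "d_mono n m \<in> FS"
proof (cases m)
  case (Pair a S)
  have "finite ((\<lambda>i. (a(i := a i - 1), insert i S)) ` {i\<in>{1..n} - S. a i \<noteq> 0})" by auto
  thus ?thesis using supp_d_mono[of n a S] Pair by (auto simp: FS_def intro: finite_subset)
qed

lemma kappa_mono_at:
  assumes "s \<in> S" "finite S"
  shows "kappa_mono (a, S) (a(s := a s + 1), S - {s}) = eps S s"
proof -
  have "kappa_mono (a, S) (a(s := a s + 1), S - {s}) = (\<Sum>t\<in>S. if t = s then eps S t else 0)"
    unfolding kappa_mono_eps
  proof (rule sum.cong[OF refl])
    fix t assume t: "t \<in> S"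
    have "(a(s := a s + 1), S - {s}) = (a(t := a t + 1), S - {t}) \<longleftrightarrow> t = s"
      using t assms by auto
    thus "eps S t * (if (a(s := a s + 1), S - {s}) = (a(t := a t + 1), S - {t}) then 1 else 0) =
          (if t = s then eps S t else 0)" by simp
  qed
  also have "\<dots> = eps S s" using assms
    by (simp add: sum.delta')
  finally show ?thesis .
qed

definition dl :: "mono \<Rightarrow> mono \<Rightarrow> real" where "dl x y = (if x = y then 1 else 0)"

lemma kappa_mono_dl: "kappa_mono (a, S) x = (\<Sum>s\<in>S. eps S s * dl x (a(s := a s + 1), S - {s}))"
  by (simp add: kappa_mono_eps dl_def)

lemma d_mono_dl: "d_mono n (a, S) x = (\<Sum>i\<in>{1..n} - S. real (a i) * eps S i * dl x (a(i := a i - 1), insert i S))"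
  by (simp add: d_mono_eps dl_def)

lemma d_mono_at:
  assumes "i \<in> {1..n} - S"
  shows "d_mono n (a, S) (a(i := a i - 1), insert i S) = real (a i) * eps S i"
proof -
  have "d_mono n (a, S) (a(i := a i - 1), insert i S) = (\<Sum>j\<in>{1..n} - S. if j = i then real (a j) * eps S j else 0)"
    unfolding d_mono_dl
  proof (rule sum.cong[OF refl])
    fix j assume j: "j \<in> {1..n} - S"
    have "(a(i := a i - 1), insert i S) = (a(j := a j - 1), insert j S) \<longleftrightarrow> j = i"
      using j assms by auto
    thus "real (a j) * eps S j * dl (a(i := a i - 1), insert i S) (a(j := a j - 1), insert j S) =
          (if j = i then real (a j) * eps S j else 0)" by (simp add: dl_def)
  qed
  also have "\<dots> = real (a i) * eps S i" using assms by (simp add: sum.delta')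
  finally show ?thesis .
qed

lemma eps_sq: "eps T i * eps T i = 1"
  by (simp add: eps_def power_mult_distrib[symmetric])

lemma eps_remove_self: "eps (S - {s}) s = eps S s"
proof -
  have "{j\<in>S - {s}. j < s} = {j\<in>S. j < s}" by auto
  thus ?thesis by (simp add: eps_def)
qed

lemma eps_insert_self: "eps (insert i S) i = eps S i"
proof -
  have "{j\<in>insert i S. j < i} = {j\<in>S. j < i}" by auto
  thus ?thesis by (simp add: eps_def)
qed

lemma sign1:
  assumes "finite S" "s \<in> S" "t \<in> S" "s < t"
  shows "eps S s * eps (S - {s}) t = - (eps S t * eps (S - {t}) s)"
proof -
  have e1: "{j\<in>S - {t}. j < s} = {j\<in>S. j < s}" using assms by auto
  have e2: "{j\<in>S - {s}. j < t} = {j\<in>S. j < t} - {s}" by auto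
  have sin: "s \<in> {j\<in>S. j < t}" using assms by auto
  have fin: "finite {j\<in>S. j < t}" using assms by auto
  then obtain b where b: "card {j\<in>S. j < t} = Suc b" using sin
    by (metis card_0_eq empty_iff not0_implies_Suc)
  have c2: "card {j\<in>S - {s}. j < t} = b" using e2 b sin fin by simp
  have q1: "eps (S - {t}) s = eps S s" unfolding eps_def using e1 by simp
  have q2: "eps (S - {s}) t = (-1) ^ b" unfolding eps_def using c2 by simp
  have q3: "eps S t = - ((-1) ^ b)" unfolding eps_def using b by simp
  show ?thesis using q1 q2 q3 by simp
qed

lemma sign2:
  assumes "finite S" "s \<in> S" "i \<notin> S"
  shows "eps S s * eps (S - {s}) i = - (eps S i * eps (insert i S) s)"
proof (cases "s < i")
  case True
  have e1: "{j\<in>insert i S. j < s} = {j\<in>S. j < s}" using True by auto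
  have e2: "{j\<in>S - {s}. j < i} = {j\<in>S. j < i} - {s}" by auto
  have sin: "s \<in> {j\<in>S. j < i}" using assms True by auto
  have fin: "finite {j\<in>S. j < i}" using assms by auto
  then obtain b where b: "card {j\<in>S. j < i} = Suc b" using sin
    by (metis card_0_eq empty_iff not0_implies_Suc)
  have c2: "card {j\<in>S - {s}. j < i} = b" using e2 b sin fin by simp
  have q1: "eps (insert i S) s = eps S s" unfolding eps_def using e1 by simp
  have q2: "eps (S - {s}) i = (-1) ^ b" unfolding eps_def using c2 by simp
  have q3: "eps S i = - ((-1) ^ b)" unfolding eps_def using b by simp
  show ?thesis using q1 q2 q3 by simp
next
  case False
  hence lt: "i < s" using assms by (cases "i = s") auto
  have e1: "{j\<in>insert i S. j < s} = insert i {j\<in>S. j < s}" using lt by auto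
  have e2: "{j\<in>S - {s}. j < i} = {j\<in>S. j < i}" using lt by auto
  have fin: "finite {j\<in>S. j < s}" using assms by auto
  have c1: "card {j\<in>insert i S. j < s} = Suc (card {j\<in>S. j < s})" using e1 fin assms by simp
  have q1: "eps (insert i S) s = - eps S s" unfolding eps_def using c1 by simp
  have q2: "eps (S - {s}) i = eps S i" unfolding eps_def using e2 by simp
  show ?thesis unfolding q1 q2 by (simp add: algebra_simps)
qed

lemma antisym_sum:
  assumes "\<And>s t. s \<in> S \<Longrightarrow> t \<in> S \<Longrightarrow> G s t = - G t s"
  shows "(\<Sum>s\<in>S. \<Sum>t\<in>S. G s t) = (0::real)"
proof -
  have "(\<Sum>s\<in>S. \<Sum>t\<in>S. G s t) = (\<Sum>t\<in>S. \<Sum>s\<in>S. G s t)" by (rule sum.swap)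
  also have "\<dots> = (\<Sum>t\<in>S. \<Sum>s\<in>S. - G t s)" 
  proof (rule sum.cong[OF refl])
    fix t assume t: "t \<in> S"
    show "(\<Sum>s\<in>S. G s t) = (\<Sum>s\<in>S. - G t s)"
    proof (rule sum.cong[OF refl])
      fix s assume "s \<in> S" thus "G s t = - G t s" using t by (rule assms)
    qed
  qed
  also have "\<dots> = - (\<Sum>t\<in>S. \<Sum>s\<in>S. G t s)" by (simp add: sum_negf)
  finally show ?thesis by simp
qed
lemma sum_remove_if: "finite S \<Longrightarrow> (\<Sum>t\<in>S - {s}. h t) = (\<Sum>t\<in>S. if t = s then 0 else h t)"
proof -
  assume "finite S"
  have "(\<Sum>t\<in>S. if t = s then 0 else h t) = (\<Sum>t\<in>S. if t \<noteq> s then h t else 0)"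
    by (rule sum.cong) auto
  also have "\<dots> = (\<Sum>t\<in>{t\<in>S. t \<noteq> s}. h t)" using \<open>finite S\<close> by (simp add: sum.inter_filter)
  also have "{t\<in>S. t \<noteq> s} = S - {s}" by auto
  finally show ?thesis by simp
qed

lemma kappa_kappa_mono: "kappa (kappa_mono (a, S)) = zero_form"
proof (cases "finite S")
  case False
  hence "kappa_mono (a, S) = (\<lambda>p. 0)" by (simp add: kappa_mono_def)
  thus ?thesis by (simp add: kappa_def supp_def zero_form_def)
next
  case fin: True
  let ?q = "\<lambda>s. (a(s := a s + 1), S - {s})"
  let ?G = "\<lambda>s t. if t = s then 0 else eps S s * (eps (S - {s}) t * dl x (a(s := a s + 1, t := a t + 1), S - {s} - {t}))"
  have inj: "inj_on ?q S"
  proof (rule inj_onI)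
    fix s t assume st: "s \<in> S" "t \<in> S" "?q s = ?q t"
    hence "S - {s} = S - {t}" by simp
    thus "s = t" using st(1,2) by blast
  qed
  have "kappa (kappa_mono (a, S)) x = 0" for x
  proof -
    let ?G = "\<lambda>s t. if t = s then 0 else eps S s * (eps (S - {s}) t * dl x (a(s := a s + 1, t := a t + 1), S - {s} - {t}))"
    have "kappa (kappa_mono (a, S)) x = (\<Sum>y\<in>?q ` S. kappa_mono (a, S) y * kappa_mono y x)"
      unfolding kappa_opx using fin supp_kappa_mono by (intro opx_eq) auto
    also have "\<dots> = (\<Sum>s\<in>S. kappa_mono (a, S) (?q s) * kappa_mono (?q s) x)"
      using inj by (simp add: sum.reindex)
    also have "\<dots> = (\<Sum>s\<in>S. \<Sum>t\<in>S. ?G s t)"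
    proof (rule sum.cong[OF refl])
      fix s assume s: "s \<in> S"
      have "kappa_mono (?q s) x = (\<Sum>t\<in>S - {s}. eps (S - {s}) t * dl x (a(s := a s + 1, t := a t + 1), S - {s} - {t}))"
        unfolding kappa_mono_dl by (rule sum.cong) auto
      also have "\<dots> = (\<Sum>t\<in>S. if t = s then 0 else eps (S - {s}) t * dl x (a(s := a s + 1, t := a t + 1), S - {s} - {t}))"
        using fin by (rule sum_remove_if)
      finally show "kappa_mono (a, S) (?q s) * kappa_mono (?q s) x = (\<Sum>t\<in>S. ?G s t)"
        using kappa_mono_at[OF s fin] by (simp add: sum_distrib_left if_distrib cong: if_cong)
    qed
    also have "\<dots> = 0"
    proof (rule antisym_sum)
      fix s t assume st: "s \<in> S" "t \<in> S"
      show "?G s t = - ?G t s"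
      proof (cases "s = t")
        case True thus ?thesis by simp
      next
        case False
        have m: "(a(s := a s + 1, t := a t + 1), S - {s} - {t}) = (a(t := a t + 1, s := a s + 1), S - {t} - {s})"
          using False by (auto simp: fun_upd_twist)
        have sg: "eps S s * eps (S - {s}) t = - (eps S t * eps (S - {t}) s)"
        proof (cases "s < t")
          case True thus ?thesis using sign1[OF fin st] by simp
        next
          case False
          hence "t < s" using \<open>s \<noteq> t\<close> by simp
          thus ?thesis using sign1[OF fin st(2) st(1)] by simp
        qed
        have "?G s t = (eps S s * eps (S - {s}) t) * dl x (a(s := a s + 1, t := a t + 1), S - {s} - {t})"
          using False by simp
        also have "\<dots> = - ((eps S t * eps (S - {t}) s) * dl x (a(t := a t + 1, s := a s + 1), S - {t} - {s}))"
          using sg m by simp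
        also have "\<dots> = - ?G t s" using False by simp
        finally show ?thesis .
      qed
    qed
    finally show ?thesis .
  qed
  thus ?thesis by (auto simp: zero_form_def)
qed

lemma kappa_kappa: "f \<in> FS \<Longrightarrow> kappa (kappa f) = zero_form"
proof -
  assume f: "f \<in> FS"
  have "kappa (kappa f) = opx kappa_mono (\<lambda>p. \<Sum>q\<in>supp f. f q * kappa_mono q p)"
    by (simp add: kappa_opx opx_def)
  also have "\<dots> = (\<lambda>p. \<Sum>q\<in>supp f. f q * opx kappa_mono (kappa_mono q) p)"
    using f kappa_mono_FS by (intro opx_lin) (auto simp: FS_def)
  also have "\<dots> = zero_form"
  proof (rule ext)
    fix p
    have "\<And>q. opx kappa_mono (kappa_mono q) p = 0"
      using kappa_kappa_mono unfolding kappa_opx zero_form_def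
      by (metis surj_pair)
    thus "(\<Sum>q\<in>supp f. f q * opx kappa_mono (kappa_mono q) p) = zero_form p"
      by (simp add: zero_form_def)
  qed
  finally show ?thesis .
qed

lemma homotopy_mono:
  assumes v: "valid_mono n (a, S)"
  shows "dform n (kappa_mono (a, S)) x + kappa (d_mono n (a, S)) x
       = (real (mdeg n a) + real (card S)) * dl x (a, S)"
proof -
  have Sn: "S \<subseteq> {1..n}" using v by (simp add: valid_mono_def)
  hence fin: "finite S" by (rule finite_subset) simp
  define D where "D = {1..n} - S"
  have finD: "finite D" by (simp add: D_def)
  let ?q = "\<lambda>s. (a(s := a s + 1), S - {s})"
  let ?w = "\<lambda>i. (a(i := a i - 1), insert i S)"
  let ?A = "\<lambda>s i. (a(s := a s + 1, i := a i - 1), insert i (S - {s}))"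
  let ?B = "\<lambda>i t. (a(i := a i - 1, t := a t + 1), insert i S - {t})"
  have injq: "inj_on ?q S"
  proof (rule inj_onI)
    fix s t assume st: "s \<in> S" "t \<in> S" "?q s = ?q t"
    hence "S - {s} = S - {t}" by simp
    thus "s = t" using st(1,2) by blast
  qed
  have injw: "inj_on ?w D"
  proof (rule inj_onI)
    fix s t assume st: "s \<in> D" "t \<in> D" "?w s = ?w t"
    hence "insert s S = insert t S" by simp
    thus "s = t" using st(1,2) by (auto simp: D_def)
  qed
  have stepA: "dform n (kappa_mono (a, S)) x = (\<Sum>s\<in>S. eps S s * d_mono n (?q s) x)"
  proof -
    have "dform n (kappa_mono (a, S)) x = (\<Sum>y\<in>?q ` S. kappa_mono (a, S) y * d_mono n y x)"
      unfolding dform_opx using fin supp_kappa_mono by (intro opx_eq) auto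
    also have "\<dots> = (\<Sum>s\<in>S. kappa_mono (a, S) (?q s) * d_mono n (?q s) x)"
      using injq by (simp add: sum.reindex)
    also have "\<dots> = (\<Sum>s\<in>S. eps S s * d_mono n (?q s) x)"
      using kappa_mono_at fin by simp
    finally show ?thesis .
  qed
  have stepA2: "d_mono n (?q s) x = (real (a s) + 1) * eps S s * dl x (a, S)
      + (\<Sum>i\<in>D. real (a i) * eps (S - {s}) i * dl x (?A s i))" if s: "s \<in> S" for s
  proof -
    have e: "{1..n} - (S - {s}) = insert s D" using s Sn by (auto simp: D_def)
    have sD: "s \<notin> D" using s by (simp add: D_def)
    have "d_mono n (?q s) x = (\<Sum>i\<in>insert s D. real ((a(s := a s + 1)) i) * eps (S - {s}) i
        * dl x ((a(s := a s + 1))(i := (a(s := a s + 1)) i - 1), insert i (S - {s})))"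
      unfolding d_mono_dl e ..
    also have "\<dots> = real ((a(s := a s + 1)) s) * eps (S - {s}) s
        * dl x ((a(s := a s + 1))(s := (a(s := a s + 1)) s - 1), insert s (S - {s}))
        + (\<Sum>i\<in>D. real ((a(s := a s + 1)) i) * eps (S - {s}) i
        * dl x ((a(s := a s + 1))(i := (a(s := a s + 1)) i - 1), insert i (S - {s})))"
      using finD sD by simp
    also have "(\<Sum>i\<in>D. real ((a(s := a s + 1)) i) * eps (S - {s}) i
        * dl x ((a(s := a s + 1))(i := (a(s := a s + 1)) i - 1), insert i (S - {s})))
        = (\<Sum>i\<in>D. real (a i) * eps (S - {s}) i * dl x (?A s i))"
      by (rule sum.cong[OF refl]) (use sD in auto)
    also have "real ((a(s := a s + 1)) s) * eps (S - {s}) s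
        * dl x ((a(s := a s + 1))(s := (a(s := a s + 1)) s - 1), insert s (S - {s}))
        = (real (a s) + 1) * eps S s * dl x (a, S)"
      using s by (simp add: eps_remove_self insert_absorb)
    finally show ?thesis .
  qed
  have stepB: "kappa (d_mono n (a, S)) x = (\<Sum>i\<in>D. real (a i) * eps S i * kappa_mono (?w i) x)"
  proof -
    have "supp (d_mono n (a, S)) \<subseteq> ?w ` D"
      using supp_d_mono[of n a S] by (auto simp: D_def)
    hence "kappa (d_mono n (a, S)) x = (\<Sum>y\<in>?w ` D. d_mono n (a, S) y * kappa_mono y x)"
      unfolding kappa_opx using finD by (intro opx_eq) auto
    also have "\<dots> = (\<Sum>i\<in>D. d_mono n (a, S) (?w i) * kappa_mono (?w i) x)"
      using injw by (simp add: sum.reindex)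
    also have "\<dots> = (\<Sum>i\<in>D. real (a i) * eps S i * kappa_mono (?w i) x)"
      using d_mono_at by (simp add: D_def)
    finally show ?thesis .
  qed
  have stepB2: "real (a i) * kappa_mono (?w i) x = real (a i) * eps S i * dl x (a, S)
      + (\<Sum>t\<in>S. real (a i) * eps (insert i S) t * dl x (?B i t))" if i: "i \<in> D" for i
  proof -
    have iS: "i \<notin> S" using i by (simp add: D_def)
    have "kappa_mono (?w i) x = (\<Sum>t\<in>insert i S. eps (insert i S) t
        * dl x ((a(i := a i - 1))(t := (a(i := a i - 1)) t + 1), insert i S - {t}))"
      unfolding kappa_mono_dl ..
    also have "\<dots> = eps (insert i S) i * dl x ((a(i := a i - 1))(i := (a(i := a i - 1)) i + 1), insert i S - {i})
        + (\<Sum>t\<in>S. eps (insert i S) t * dl x ((a(i := a i - 1))(t := (a(i := a i - 1)) t + 1), insert i S - {t}))"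
      using fin iS by simp
    also have "(\<Sum>t\<in>S. eps (insert i S) t * dl x ((a(i := a i - 1))(t := (a(i := a i - 1)) t + 1), insert i S - {t}))
        = (\<Sum>t\<in>S. eps (insert i S) t * dl x (?B i t))"
      by (rule sum.cong[OF refl]) (use iS in auto)
    finally have k: "kappa_mono (?w i) x = eps (insert i S) i * dl x ((a(i := a i - 1))(i := (a(i := a i - 1)) i + 1), insert i S - {i})
        + (\<Sum>t\<in>S. eps (insert i S) t * dl x (?B i t))" .
    have t1: "real (a i) * (eps (insert i S) i * dl x ((a(i := a i - 1))(i := (a(i := a i - 1)) i + 1), insert i S - {i}))
        = real (a i) * eps S i * dl x (a, S)"
    proof (cases "a i = 0")
      case True thus ?thesis by simp
    next
      case False
      hence "(a(i := a i - 1))(i := (a(i := a i - 1)) i + 1) = a" by auto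
      moreover have "insert i S - {i} = S" using iS by auto
      ultimately show ?thesis by (simp add: eps_insert_self)
    qed
    show ?thesis unfolding k distrib_left using t1 by (simp add: sum_distrib_left mult.assoc)
  qed
  define X1 where "X1 = (\<Sum>s\<in>S. \<Sum>i\<in>D. eps S s * (real (a i) * eps (S - {s}) i * dl x (?A s i)))"
  define X2 where "X2 = (\<Sum>i\<in>D. \<Sum>t\<in>S. eps S i * (real (a i) * eps (insert i S) t * dl x (?B i t)))"
  have dpart: "dform n (kappa_mono (a, S)) x = (\<Sum>s\<in>S. (real (a s) + 1) * dl x (a, S)) + X1"
  proof -
    have "dform n (kappa_mono (a, S)) x = (\<Sum>s\<in>S. (real (a s) + 1) * dl x (a, S)
        + (\<Sum>i\<in>D. eps S s * (real (a i) * eps (S - {s}) i * dl x (?A s i))))"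
      unfolding stepA
    proof (rule sum.cong[OF refl])
      fix s assume s: "s \<in> S"
      have "eps S s * ((real (a s) + 1) * eps S s * dl x (a, S)) = (real (a s) + 1) * dl x (a, S) * (eps S s * eps S s)"
        by (simp add: algebra_simps)
      thus "eps S s * d_mono n (?q s) x = (real (a s) + 1) * dl x (a, S)
        + (\<Sum>i\<in>D. eps S s * (real (a i) * eps (S - {s}) i * dl x (?A s i)))"
        unfolding stepA2[OF s] distrib_left eps_sq by (simp add: sum_distrib_left)
    qed
    thus ?thesis by (simp add: sum.distrib X1_def)
  qed
  have kpart: "kappa (d_mono n (a, S)) x = (\<Sum>i\<in>D. real (a i) * dl x (a, S)) + X2"
  proof -
    have "kappa (d_mono n (a, S)) x = (\<Sum>i\<in>D. real (a i) * dl x (a, S)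
        + (\<Sum>t\<in>S. eps S i * (real (a i) * eps (insert i S) t * dl x (?B i t))))"
      unfolding stepB
    proof (rule sum.cong[OF refl])
      fix i assume i: "i \<in> D"
      have "real (a i) * eps S i * kappa_mono (?w i) x = eps S i * (real (a i) * kappa_mono (?w i) x)"
        by simp
      also have "\<dots> = real (a i) * dl x (a, S) * (eps S i * eps S i)
        + (\<Sum>t\<in>S. eps S i * (real (a i) * eps (insert i S) t * dl x (?B i t)))"
        unfolding stepB2[OF i] distrib_left by (simp add: sum_distrib_left algebra_simps)
      finally show "real (a i) * eps S i * kappa_mono (?w i) x = real (a i) * dl x (a, S)
        + (\<Sum>t\<in>S. eps S i * (real (a i) * eps (insert i S) t * dl x (?B i t)))"
        by (simp add: eps_sq)
    qed
    thus ?thesis by (simp add: sum.distrib X2_def)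
  qed
  have X: "X1 + X2 = 0"
  proof -
    have "X2 = (\<Sum>t\<in>S. \<Sum>i\<in>D. eps S i * (real (a i) * eps (insert i S) t * dl x (?B i t)))"
      unfolding X2_def by (rule sum.swap)
    hence "X1 + X2 = (\<Sum>s\<in>S. \<Sum>i\<in>D. eps S s * (real (a i) * eps (S - {s}) i * dl x (?A s i))
        + eps S i * (real (a i) * eps (insert i S) s * dl x (?B i s)))"
      by (simp add: X1_def sum.distrib)
    also have "\<dots> = 0"
    proof (rule sum.neutral, rule ballI, rule sum.neutral, rule ballI)
      fix s i assume s: "s \<in> S" and i: "i \<in> D"
      have iS: "i \<notin> S" using i by (simp add: D_def)
      have ne: "s \<noteq> i" using s iS by auto
      have m: "?A s i = ?B i s" using ne by (auto simp: fun_upd_twist)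
      have sg: "eps S s * eps (S - {s}) i = - (eps S i * eps (insert i S) s)"
        by (rule sign2[OF fin s iS])
      have "eps S s * (real (a i) * eps (S - {s}) i * dl x (?A s i))
          = real (a i) * dl x (?A s i) * (eps S s * eps (S - {s}) i)" by (simp add: algebra_simps)
      also have "\<dots> = - (real (a i) * dl x (?B i s) * (eps S i * eps (insert i S) s))"
        unfolding sg m by simp
      finally show "eps S s * (real (a i) * eps (S - {s}) i * dl x (?A s i))
        + eps S i * (real (a i) * eps (insert i S) s * dl x (?B i s)) = 0"
        by (simp add: algebra_simps)
    qed
    finally show ?thesis .
  qed
  have deg: "real (mdeg n a) = (\<Sum>s\<in>S. real (a s)) + (\<Sum>i\<in>D. real (a i))"
  proof -
    have "mdeg n a = (\<Sum>i\<in>{1..n} - S. a i) + (\<Sum>i\<in>S. a i)"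
      unfolding mdeg_def by (rule sum.subset_diff[OF Sn]) simp
    thus ?thesis by (simp add: D_def)
  qed
  have "dform n (kappa_mono (a, S)) x + kappa (d_mono n (a, S)) x
      = ((\<Sum>s\<in>S. real (a s)) + real (card S) + (\<Sum>i\<in>D. real (a i))) * dl x (a, S) + (X1 + X2)"
  proof -
    have h1: "(\<Sum>i\<in>D. real (a i) * dl x (a, S)) = (\<Sum>i\<in>D. real (a i)) * dl x (a, S)"
      by (simp add: sum_distrib_right)
    have h2: "(\<Sum>s\<in>S. (real (a s) + 1) * dl x (a, S)) = ((\<Sum>s\<in>S. real (a s)) + real (card S)) * dl x (a, S)"
      by (simp add: sum_distrib_right[symmetric] sum.distrib)
    show ?thesis unfolding dpart kpart h1 h2 by (simp add: algebra_simps)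
  qed
  also have "\<dots> = (real (mdeg n a) + real (card S)) * dl x (a, S)"
    unfolding X deg by simp
  finally show ?thesis .
qed

lemma homotopy:
  assumes f: "f \<in> FS" and sf: "supp f \<subseteq> {m. valid_mono n m \<and> mdeg n (fst m) = p \<and> card (snd m) = k}"
  shows "dform n (kappa f) x + kappa (dform n f) x = (real p + real k) * f x"
proof -
  have fin: "finite (supp f)" using f by (simp add: FS_def)
  have "dform n (kappa f) = opx (d_mono n) (\<lambda>y. \<Sum>q\<in>supp f. f q * kappa_mono q y)"
    by (simp add: dform_opx kappa_def)
  also have "\<dots> = (\<lambda>y. \<Sum>q\<in>supp f. f q * opx (d_mono n) (kappa_mono q) y)"
    using fin kappa_mono_FS by (intro opx_lin) (auto simp: FS_def)
  finally have h1: "dform n (kappa f) x = (\<Sum>q\<in>supp f. f q * dform n (kappa_mono q) x)"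
    by (simp add: dform_opx)
  have "kappa (dform n f) = opx kappa_mono (\<lambda>y. \<Sum>q\<in>supp f. f q * d_mono n q y)"
    by (simp add: kappa_opx dform_def)
  also have "\<dots> = (\<lambda>y. \<Sum>q\<in>supp f. f q * opx kappa_mono (d_mono n q) y)"
    using fin d_mono_FS by (intro opx_lin) (auto simp: FS_def)
  finally have h2: "kappa (dform n f) x = (\<Sum>q\<in>supp f. f q * kappa (d_mono n q) x)"
    by (simp add: kappa_opx)
  have "dform n (kappa f) x + kappa (dform n f) x
      = (\<Sum>q\<in>supp f. f q * (dform n (kappa_mono q) x + kappa (d_mono n q) x))"
    unfolding h1 h2 by (simp add: sum.distrib distrib_left)
  also have "\<dots> = (\<Sum>q\<in>supp f. (real p + real k) * (f q * mono_form q x))"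
  proof (rule sum.cong[OF refl])
    fix q assume q: "q \<in> supp f"
    obtain a S where qa: "q = (a, S)" by (cases q)
    have "valid_mono n (a, S)" "mdeg n a = p" "card S = k" using sf q qa by auto
    hence "dform n (kappa_mono q) x + kappa (d_mono n q) x = (real p + real k) * mono_form q x"
      using homotopy_mono[of n a S x] qa by (simp add: dl_def mono_form_def)
    thus "f q * (dform n (kappa_mono q) x + kappa (d_mono n q) x) = (real p + real k) * (f q * mono_form q x)"
      by simp
  qed
  also have "\<dots> = (real p + real k) * f x"
  proof -
    have e: "(\<Sum>q\<in>supp f. f q * mono_form q x) = f x"
      using fun_cong[OF form_expand[OF fin], of x] by simp
    show ?thesis by (simp add: sum_distrib_left[symmetric] e)
  qed
  finally show ?thesis .
qed

definition M :: "nat \<Rightarrow> nat \<Rightarrow> nat \<Rightarrow> mono set" where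
  "M n p k = {m. valid_mono n m \<and> mdeg n (fst m) = p \<and> card (snd m) = k}"

lemma Hrl_char: "Hrl n p l k = {f\<in>FS. supp f \<subseteq> {m. valid_mono n m \<and> mdeg n (fst m) = p \<and> card (snd m) = k \<and> l \<le> ldeg n m}}"
  unfolding Hrl_def by (rule lspan_monos)

lemma Hsp_char: "Hsp n p k = {f\<in>FS. supp f \<subseteq> M n p k}"
  unfolding Hsp_def Hrl_char M_def by simp

lemma Hrl_Hsp: "Hrl n p l k \<subseteq> Hsp n p k"
  unfolding Hsp_char Hrl_char M_def by auto

lemma Hrl_mono: "l' \<le> l \<Longrightarrow> Hrl n p l k \<subseteq> Hrl n p l' k"
  unfolding Hrl_char by auto

lemma mdeg_upd: "s \<in> {1..n} \<Longrightarrow> mdeg n (a(s := v)) + a s = mdeg n a + v"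
proof -
  assume s: "s \<in> {1..n}"
  have "mdeg n (a(s := v)) = v + (\<Sum>i\<in>{1..n} - {s}. (a(s := v)) i)"
    unfolding mdeg_def using s by (simp add: sum.remove)
  moreover have "mdeg n a = a s + (\<Sum>i\<in>{1..n} - {s}. a i)"
    unfolding mdeg_def using s by (simp add: sum.remove)
  moreover have "(\<Sum>i\<in>{1..n} - {s}. (a(s := v)) i) = (\<Sum>i\<in>{1..n} - {s}. a i)"
    by (rule sum.cong) auto
  ultimately show ?thesis by simp
qed

lemma kappa_M: "q \<in> M n j (Suc k) \<Longrightarrow> supp (kappa_mono q) \<subseteq> M n (Suc j) k"
proof -
  assume q: "q \<in> M n j (Suc k)"
  obtain a S where qa: "q = (a, S)" by (cases q)
  have v: "\<forall>i. i \<notin> {1..n} \<longrightarrow> a i = 0" "S \<subseteq> {1..n}" "mdeg n a = j" "card S = Suc k"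
    using q qa by (auto simp: M_def valid_mono_def)
  have fin: "finite S" using v(2) by (rule finite_subset) simp
  show ?thesis
  proof
    fix y assume "y \<in> supp (kappa_mono q)"
    then obtain s where s: "s \<in> S" "y = (a(s := a s + 1), S - {s})"
      using supp_kappa_mono[of a S] qa by auto
    have "mdeg n (a(s := a s + 1)) = Suc j" using mdeg_upd[of s n a "a s + 1"] s v by auto
    moreover have "card (S - {s}) = k" using s v fin by simp
    moreover have "valid_mono n (a(s := a s + 1), S - {s})"
      using v s unfolding valid_mono_def by auto
    ultimately show "y \<in> M n (Suc j) k" using s by (simp add: M_def)
  qed
qed

lemma d_M: "q \<in> M n j k \<Longrightarrow> supp (d_mono n q) \<subseteq> M n (j - 1) (Suc k)"
proof -
  assume q: "q \<in> M n j k"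
  obtain a S where qa: "q = (a, S)" by (cases q)
  have v: "\<forall>i. i \<notin> {1..n} \<longrightarrow> a i = 0" "S \<subseteq> {1..n}" "mdeg n a = j" "card S = k"
    using q qa by (auto simp: M_def valid_mono_def)
  have fin: "finite S" using v(2) by (rule finite_subset) simp
  show ?thesis
  proof
    fix y assume "y \<in> supp (d_mono n q)"
    then obtain i where i: "i \<in> {1..n}" "i \<notin> S" "a i \<noteq> 0" "y = (a(i := a i - 1), insert i S)"
      using supp_d_mono[of n a S] qa by auto
    have "mdeg n (a(i := a i - 1)) = j - 1" using mdeg_upd[of i n a "a i - 1"] i v by auto
    moreover have "card (insert i S) = Suc k" using i v fin by simp
    moreover have "valid_mono n (a(i := a i - 1), insert i S)"
      using v i unfolding valid_mono_def by auto
    ultimately show "y \<in> M n (j - 1) (Suc k)" using i by (simp add: M_def)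
  qed
qed

lemma kappa_Hsp: "kappa ` Hsp n j (Suc k) \<subseteq> Hsp n (Suc j) k"
proof
  fix y assume "y \<in> kappa ` Hsp n j (Suc k)"
  then obtain f where f: "f \<in> FS" "supp f \<subseteq> M n j (Suc k)" "y = kappa f" by (auto simp: Hsp_char)
  have "kappa f \<in> FS" unfolding kappa_opx using f by (intro opx_FS kappa_mono_FS)
  moreover have "supp (kappa f) \<subseteq> M n (Suc j) k"
    unfolding kappa_opx by (rule opx_supp[where P="\<lambda>q. q \<in> M n j (Suc k)"]) (use f kappa_M in auto)
  ultimately show "y \<in> Hsp n (Suc j) k" using f by (simp add: Hsp_char)
qed

lemma d_Hsp: "dform n ` Hsp n j k \<subseteq> Hsp n (j - 1) (Suc k)"
proof
  fix y assume "y \<in> dform n ` Hsp n j k"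
  then obtain f where f: "f \<in> FS" "supp f \<subseteq> M n j k" "y = dform n f" by (auto simp: Hsp_char)
  have "dform n f \<in> FS" unfolding dform_opx using f by (intro opx_FS d_mono_FS)
  moreover have "supp (dform n f) \<subseteq> M n (j - 1) (Suc k)"
    unfolding dform_opx by (rule opx_supp[where P="\<lambda>q. q \<in> M n j k"]) (use f d_M in auto)
  ultimately show "y \<in> Hsp n (j - 1) (Suc k)" using f by (simp add: Hsp_char)
qed

lemma Hsp_FS: "Hsp n p k \<subseteq> FS" by (auto simp: Hsp_char)
lemma Hrl_FS: "Hrl n p l k \<subseteq> FS" by (auto simp: Hrl_char)

lemma Psp_FS: "Psp n r k \<subseteq> FS"
  unfolding Psp_def using Hsp_FS by (intro lspan_sub subsp_FS) auto

lemma kappa_FS: "f \<in> FS \<Longrightarrow> kappa f \<in> FS"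
  unfolding kappa_opx by (intro opx_FS kappa_mono_FS)
lemma dform_FS: "f \<in> FS \<Longrightarrow> dform n f \<in> FS"
  unfolding dform_opx by (intro opx_FS d_mono_FS)

lemma Jsp_FS: "Jsp n r k \<subseteq> FS"
  unfolding Jsp_def using Hrl_FS kappa_FS by (intro lspan_sub subsp_FS) blast

lemma zero_FS: "zero_form \<in> FS" by (simp add: FS_def supp_def zero_form_def)

lemma Ssp_FS: "Ssp n r k \<subseteq> FS"
  unfolding Ssp_def
proof (intro lspan_sub subsp_FS Un_least)
  show "Psp n r k \<subseteq> FS" by (rule Psp_FS)
  show "Jsp n r k \<subseteq> FS" by (rule Jsp_FS)
  show "(if k = 0 then {zero_form} else dform n ` Jsp n (r + 1) (k - 1)) \<subseteq> FS"
    using zero_FS Jsp_FS[of n "r + 1" "k - 1"] dform_FS by auto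
qed

lemma Hsp_Psp: "j \<le> r \<Longrightarrow> Hsp n j k \<subseteq> Psp n r k"
proof -
  assume "j \<le> r"
  hence "Hsp n j k \<subseteq> (\<Union>j\<in>{0..r}. Hsp n j k)" by auto
  thus ?thesis unfolding Psp_def using lspan_sup by (rule subset_trans)
qed

lemma Psp_mono: "r \<le> r' \<Longrightarrow> Psp n r k \<subseteq> Psp n r' k"
  unfolding Psp_def by (rule lspan_mono, rule UN_mono) auto

lemma kappa_Psp: "kappa ` Psp n r (Suc k) \<subseteq> Psp n (Suc r) k"
  unfolding Psp_def[of n r]
proof (rule lin_image)
  show "lin kappa" unfolding kappa_opx by (intro lin_opx kappa_mono_FS)
  show "(\<Union>j\<in>{0..r}. Hsp n j (Suc k)) \<subseteq> FS" using Hsp_FS by blast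
  show "subsp (Psp n (Suc r) k)" unfolding Psp_def by (rule subsp_lspan)
  show "kappa ` (\<Union>j\<in>{0..r}. Hsp n j (Suc k)) \<subseteq> Psp n (Suc r) k"
  proof
    fix y assume "y \<in> kappa ` (\<Union>j\<in>{0..r}. Hsp n j (Suc k))"
    then obtain j where j: "j \<le> r" "y \<in> kappa ` Hsp n j (Suc k)" by auto
    hence "y \<in> Hsp n (Suc j) k" using kappa_Hsp by blast
    thus "y \<in> Psp n (Suc r) k" using Hsp_Psp[of "Suc j" "Suc r" n k] j by auto
  qed
qed

lemma d_Psp: "dform n ` Psp n r k \<subseteq> Psp n (r - 1) (Suc k)"
  unfolding Psp_def[of n r]
proof (rule lin_image)
  show "lin (dform n)" unfolding dform_opx by (intro lin_opx d_mono_FS)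
  show "(\<Union>j\<in>{0..r}. Hsp n j k) \<subseteq> FS" using Hsp_FS by blast
  show "subsp (Psp n (r - 1) (Suc k))" unfolding Psp_def by (rule subsp_lspan)
  show "dform n ` (\<Union>j\<in>{0..r}. Hsp n j k) \<subseteq> Psp n (r - 1) (Suc k)"
  proof
    fix y assume "y \<in> dform n ` (\<Union>j\<in>{0..r}. Hsp n j k)"
    then obtain j where j: "j \<le> r" "y \<in> dform n ` Hsp n j k" by auto
    hence "y \<in> Hsp n (j - 1) (Suc k)" using d_Hsp by blast
    moreover have "j - 1 \<le> r - 1" using j by simp
    ultimately show "y \<in> Psp n (r - 1) (Suc k)" using Hsp_Psp by blast
  qed
qed

lemma J1: "Jsp n r k \<subseteq> lspan (Psp n (Suc r) k \<union> Jsp n (Suc r) k)"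
  unfolding Jsp_def[of n r]
proof (rule lspan_sub[OF subsp_lspan])
  show "(\<Union>l\<in>{1..}. kappa ` Hrl n (r + l - 1) l (k + 1)) \<subseteq> lspan (Psp n (Suc r) k \<union> Jsp n (Suc r) k)"
  proof
    fix y assume "y \<in> (\<Union>l\<in>{1..}. kappa ` Hrl n (r + l - 1) l (k + 1))"
    then obtain l f where lf: "1 \<le> l" "f \<in> Hrl n (r + l - 1) l (k + 1)" "y = kappa f" by auto
    show "y \<in> lspan (Psp n (Suc r) k \<union> Jsp n (Suc r) k)"
    proof (cases "l = 1")
      case True
      hence "f \<in> Hsp n r (Suc k)" using lf Hrl_Hsp[of n r 1 "Suc k"] by auto
      hence "y \<in> Hsp n (Suc r) k" using lf(3) kappa_Hsp[of n r k] by blast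
      hence "y \<in> Psp n (Suc r) k" using Hsp_Psp[of "Suc r" "Suc r" n k] by blast
      hence "y \<in> Psp n (Suc r) k \<union> Jsp n (Suc r) k" by blast
      thus ?thesis using lspan_sup[of "Psp n (Suc r) k \<union> Jsp n (Suc r) k"] by blast
    next
      case False
      hence l2: "l - 1 \<in> {1..}" using lf by simp
      have eq: "r + l - 1 = Suc r + (l - 1) - 1" using lf False by simp
      have "f \<in> Hrl n (Suc r + (l - 1) - 1) l (k + 1)" using lf(2) unfolding eq .
      hence "f \<in> Hrl n (Suc r + (l - 1) - 1) (l - 1) (k + 1)"
        using Hrl_mono[of "l - 1" l n "Suc r + (l - 1) - 1" "k + 1"] by auto
      hence "y \<in> kappa ` Hrl n (Suc r + (l - 1) - 1) (l - 1) (k + 1)"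
        using lf(3) by blast
      hence "y \<in> (\<Union>l\<in>{1..}. kappa ` Hrl n (Suc r + l - 1) l (k + 1))"
        using l2 by (rule UN_I[rotated])
      hence "y \<in> Jsp n (Suc r) k" unfolding Jsp_def
        using lspan_sup[of "\<Union>l\<in>{1..}. kappa ` Hrl n (Suc r + l - 1) l (k + 1)"] by blast
      hence "y \<in> Psp n (Suc r) k \<union> Jsp n (Suc r) k" by blast
      thus ?thesis using lspan_sup[of "Psp n (Suc r) k \<union> Jsp n (Suc r) k"] by blast
    qed
  qed
qed

lemma kdk:
  assumes e: "\<eta> \<in> Hrl n p l (Suc k)"
  shows "kappa (dform n (kappa \<eta>)) = (\<lambda>x. (real p + real (Suc k)) * kappa \<eta> x)"
proof -
  have eF: "\<eta> \<in> FS" and es: "supp \<eta> \<subseteq> {m. valid_mono n m \<and> mdeg n (fst m) = p \<and> card (snd m) = Suc k}"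
    using e by (auto simp: Hrl_char)
  have "dform n (kappa \<eta>) = (\<lambda>x. (real p + real (Suc k)) * \<eta> x + (-1) * kappa (dform n \<eta>) x)"
  proof (rule ext)
    fix x
    have "dform n (kappa \<eta>) x + kappa (dform n \<eta>) x = (real p + real (Suc k)) * \<eta> x"
      by (rule homotopy[OF eF es])
    thus "dform n (kappa \<eta>) x = (real p + real (Suc k)) * \<eta> x + (-1) * kappa (dform n \<eta>) x"
      by simp
  qed
  hence "kappa (dform n (kappa \<eta>)) = kappa (\<lambda>x. (real p + real (Suc k)) * \<eta> x + (-1) * kappa (dform n \<eta>) x)"
    by simp
  also have "\<dots> = (\<lambda>x. (real p + real (Suc k)) * kappa \<eta> x + (-1) * kappa (kappa (dform n \<eta>)) x)"
    unfolding kappa_opx by (rule opx_lin2[OF eF]) (use kappa_FS dform_FS eF in \<open>simp add: kappa_opx\<close>)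
  also have "\<dots> = (\<lambda>x. (real p + real (Suc k)) * kappa \<eta> x)"
    using kappa_kappa[OF dform_FS[OF eF]] by (simp add: zero_form_def)
  finally show ?thesis .
qed

lemma subsp_Ssp: "subsp (Ssp n r k)"
  unfolding Ssp_def by (rule subsp_lspan)

lemma Ssp_parts:
  "Psp n r k \<subseteq> Ssp n r k" "Jsp n r k \<subseteq> Ssp n r k" "zero_form \<in> Ssp n r k"
  "0 < k \<Longrightarrow> dform n ` Jsp n (r + 1) (k - 1) \<subseteq> Ssp n r k"
proof -
  have L: "\<And>X. X \<subseteq> Psp n r k \<union> Jsp n r k \<union> (if k = 0 then {zero_form} else dform n ` Jsp n (r + 1) (k - 1)) \<Longrightarrow> X \<subseteq> Ssp n r k"
    unfolding Ssp_def using lspan_sup by (rule subset_trans[rotated])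
  show "Psp n r k \<subseteq> Ssp n r k" by (rule L) blast
  show "Jsp n r k \<subseteq> Ssp n r k" by (rule L) blast
  show "zero_form \<in> Ssp n r k" using subsp_Ssp by (simp add: subsp_def)
  show "0 < k \<Longrightarrow> dform n ` Jsp n (r + 1) (k - 1) \<subseteq> Ssp n r k" by (rule L) auto
qed

theorem mainTheorem1:
  fixes n r k :: nat
  assumes "n \<ge> 1" and "r \<ge> 1" and "k \<le> n"
  shows "Ssp n r k \<subseteq> Sminus n (r + 1) k \<and> Sminus n (r + 1) k \<subseteq> Ssp n (r + 1) k"
proof
  show "Ssp n r k \<subseteq> Sminus n (r + 1) k"
  proof -
    have "Ssp n r k \<subseteq> Ssp n (r + 1 - 1) k \<union> kappa ` Ssp n (r + 1 - 1) (k + 1)" by simp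
    thus ?thesis unfolding Sminus_def using lspan_sup by (rule subset_trans)
  qed
next
  define V where "V = Ssp n (Suc r) k"
  have sV: "subsp V" unfolding V_def by (rule subsp_Ssp)
  have PV: "Psp n (Suc r) k \<subseteq> V" and JV: "Jsp n (Suc r) k \<subseteq> V" and zV: "zero_form \<in> V"
    unfolding V_def using Ssp_parts by auto
  have S1: "Ssp n r k \<subseteq> V"
    unfolding Ssp_def[of n r k]
  proof (intro lspan_sub[OF sV] Un_least)
    show "Psp n r k \<subseteq> V" using Psp_mono[of r "Suc r" n k] PV by simp
    have "lspan (Psp n (Suc r) k \<union> Jsp n (Suc r) k) \<subseteq> V"
      using PV JV by (intro lspan_sub[OF sV]) auto
    thus "Jsp n r k \<subseteq> V" using J1[of n r k] by simp
    show "(if k = 0 then {zero_form} else dform n ` Jsp n (r + 1) (k - 1)) \<subseteq> V"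
    proof (cases "k = 0")
      case True thus ?thesis using zV by simp
    next
      case False
      have DV: "dform n ` Jsp n (Suc (Suc r)) (k - 1) \<subseteq> V"
        using Ssp_parts(4)[of k n "Suc r"] False unfolding V_def by simp
      have DP: "dform n ` Psp n (Suc (Suc r)) (k - 1) \<subseteq> V"
        using d_Psp[of n "Suc (Suc r)" "k - 1"] False PV by simp
      have "dform n ` lspan (Psp n (Suc (Suc r)) (k - 1) \<union> Jsp n (Suc (Suc r)) (k - 1)) \<subseteq> V"
      proof (rule lin_image[OF _ _ sV])
        show "lin (dform n)" unfolding dform_opx by (intro lin_opx d_mono_FS)
        show "Psp n (Suc (Suc r)) (k - 1) \<union> Jsp n (Suc (Suc r)) (k - 1) \<subseteq> FS"
          using Psp_FS Jsp_FS by blast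
        show "dform n ` (Psp n (Suc (Suc r)) (k - 1) \<union> Jsp n (Suc (Suc r)) (k - 1)) \<subseteq> V"
          using DV DP by blast
      qed
      moreover have "dform n ` Jsp n (r + 1) (k - 1) \<subseteq> dform n ` lspan (Psp n (Suc (Suc r)) (k - 1) \<union> Jsp n (Suc (Suc r)) (k - 1))"
        using J1[of n "r + 1" "k - 1"] by (intro image_mono) simp
      ultimately show ?thesis using False by simp
    qed
  qed
  have S2: "kappa ` Ssp n r (Suc k) \<subseteq> V"
    unfolding Ssp_def[of n r "Suc k"]
  proof (rule lin_image[OF _ _ sV])
    show "lin kappa" unfolding kappa_opx by (intro lin_opx kappa_mono_FS)
    show "Psp n r (Suc k) \<union> Jsp n r (Suc k) \<union> (if Suc k = 0 then {zero_form} else dform n ` Jsp n (r + 1) (Suc k - 1)) \<subseteq> FS"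
    proof -
      have "\<forall>x\<in>Jsp n (Suc r) k. dform n x \<in> FS" using Jsp_FS[of n "Suc r" k] dform_FS by blast
      thus ?thesis using Psp_FS Jsp_FS by auto
    qed
    have K1: "kappa ` Psp n r (Suc k) \<subseteq> V" using kappa_Psp[of n r k] PV by blast
    have K2: "kappa ` Jsp n r (Suc k) \<subseteq> V"
      unfolding Jsp_def
    proof (rule lin_image[OF _ _ sV])
      show "lin kappa" unfolding kappa_opx by (intro lin_opx kappa_mono_FS)
      show "(\<Union>l\<in>{1..}. kappa ` Hrl n (r + l - 1) l (Suc k + 1)) \<subseteq> FS"
        using Hrl_FS kappa_FS by blast
      show "kappa ` (\<Union>l\<in>{1..}. kappa ` Hrl n (r + l - 1) l (Suc k + 1)) \<subseteq> V"
      proof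
        fix y assume "y \<in> kappa ` (\<Union>l\<in>{1..}. kappa ` Hrl n (r + l - 1) l (Suc k + 1))"
        then obtain l f where "f \<in> Hrl n (r + l - 1) l (Suc k + 1)" "y = kappa (kappa f)" by blast
        hence "y = zero_form" using kappa_kappa Hrl_FS by blast
        thus "y \<in> V" using zV by simp
      qed
    qed
    have K3: "(\<lambda>f. kappa (dform n f)) ` Jsp n (r + 1) k \<subseteq> V"
      unfolding Jsp_def
    proof (rule lin_image[OF _ _ sV])
      show "lin (\<lambda>f. kappa (dform n f))" unfolding kappa_opx dform_opx
        by (intro lin_comp kappa_mono_FS d_mono_FS)
      show "(\<Union>l\<in>{1..}. kappa ` Hrl n (r + 1 + l - 1) l (k + 1)) \<subseteq> FS"
        using Hrl_FS kappa_FS by blast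
      show "(\<lambda>f. kappa (dform n f)) ` (\<Union>l\<in>{1..}. kappa ` Hrl n (r + 1 + l - 1) l (k + 1)) \<subseteq> V"
      proof
        fix y assume "y \<in> (\<lambda>f. kappa (dform n f)) ` (\<Union>l\<in>{1..}. kappa ` Hrl n (r + 1 + l - 1) l (k + 1))"
        then obtain l \<eta> where l: "l \<in> {1..}" "\<eta> \<in> Hrl n (r + 1 + l - 1) l (k + 1)" "y = kappa (dform n (kappa \<eta>))"
          by blast
        have y: "y = (\<lambda>x. (real (r + 1 + l - 1) + real (Suc k)) * kappa \<eta> x)"
          using kdk[of \<eta> n "r + 1 + l - 1" l k] l by simp
        have "kappa \<eta> \<in> (\<Union>l\<in>{1..}. kappa ` Hrl n (r + 1 + l - 1) l (k + 1))" using l by blast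
        hence "kappa \<eta> \<in> Jsp n (r + 1) k" unfolding Jsp_def
          using lspan_sup[of "\<Union>l\<in>{1..}. kappa ` Hrl n (r + 1 + l - 1) l (k + 1)"] by (rule subsetD[rotated])
        hence "kappa \<eta> \<in> V" using JV by auto
        thus "y \<in> V" using sV y by (simp add: subsp_def)
      qed
    qed
    show "kappa ` (Psp n r (Suc k) \<union> Jsp n r (Suc k) \<union> (if Suc k = 0 then {zero_form} else dform n ` Jsp n (r + 1) (Suc k - 1))) \<subseteq> V"
    proof -
      have "kappa ` (dform n ` Jsp n (r + 1) (Suc k - 1)) = (\<lambda>f. kappa (dform n f)) ` Jsp n (r + 1) k"
        by (simp add: image_image)
      hence K3': "kappa ` (dform n ` Jsp n (r + 1) (Suc k - 1)) \<subseteq> V" using K3 by simp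
      have "kappa ` (Psp n r (Suc k) \<union> Jsp n r (Suc k) \<union> (if Suc k = 0 then {zero_form} else dform n ` Jsp n (r + 1) (Suc k - 1)))
        = kappa ` Psp n r (Suc k) \<union> kappa ` Jsp n r (Suc k) \<union> kappa ` (dform n ` Jsp n (r + 1) (Suc k - 1))"
        by (simp add: image_Un)
      thus ?thesis using K1 K2 K3' by (simp only: Un_least)
    qed
  qed
  show "Sminus n (r + 1) k \<subseteq> Ssp n (r + 1) k"
  proof -
    have "Sminus n (r + 1) k = lspan (Ssp n r k \<union> kappa ` Ssp n r (Suc k))"
      by (simp add: Sminus_def)
    also have "\<dots> \<subseteq> V" using S1 S2 by (intro lspan_sub[OF sV] Un_least)
    finally show ?thesis by (simp add: V_def)
  qed
qed

end
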